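(* Let $\mathbf{q}$ be any point on the line $\mathcal{L}$ satisfying $q_{\min} \leq q_{d} \leq q_{\max}$, and define \[ \mu(\mathbf{q}) := 1-\frac{(q_d-q_{\min})(1-\overline{\mu})}{q_{\max}-q_{\min}} ~. \] Then $\mu(\mathbf{q})\geq\overline{\mu}$, and the reduced convex hull of $\mathcal{P}^-$ is exactly equal to the following non-empty line segment of $\mathcal{L}$: \[ \mathrm{conv}_{\mu(\mathbf{q})}(\mathcal{P}^-) = \left[\mathbf{q},\mathbf{u}_{\mathrm{left}}+\mathbf{u}_{\mathrm{right}}-\mathbf{q}\right] \subseteq \{\mathbf{x}\in\mathcal{L} : x_d \geq q_{d}\} . \]
   Context: Let $\mathcal{S}:=\{\mathbf{x}\in\mathbb{R}^d: x_1=\ldots=x_{d-2}=0\}$ and $\mathcal{L}:=\{(0,\ldots,0,2,y)^T:y\in\mathbb{R}\}\subseteq\mathcal{S}$. For a finite point set $\mathcal{P}$ and $\frac{1}{|\mathcal{P}|}\le\mu\le1$, the reduced convex hull is $\mathrm{conv}_\mu(\mathcal{P}):=\{\sum_{p\in\mathcal{P}}\alpha_p p: 0\le\alpha_p\le\mu,\ \sum_p\alpha_p=1\}$. In the construction, $\overline{\mu}$ is a constant with $\frac12\le\overline{\mu}<1$ (defined as $\max\{\frac12,\max_{\sigma}\mu_\sigma^{(\delta)}\}$, the maximum over $\sigma\in\{-1,1\}^d$ with $\sigma_{d-1}=\sigma_d=1$ of the largest coefficient in the unique convex combination of the point $\mathbf{p}_\sigma^{(\delta)}$ in terms of vertices of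 the stretched dual Goldfarb cube), and $q_{\min}<q_{\max}$ are finite reals (the minimum and maximum of the last coordinates $q_{\sigma,d}$ of the constructed points $\mathbf{q}_\sigma\in\mathcal{L}$ over those $\sigma$). The second point class is $\mathcal{P}^-:=\{\mathbf{u}_{\mathrm{left}},\mathbf{u}_{\mathrm{right}}\}$ with $\mathbf{u}_{\mathrm{left}}:=(0,\ldots,0,2,q_{\min})^T$ and $\mathbf{u}_{\mathrm{right}}:=(0,\ldots,0,2,q_{\min}+\frac{q_{\max}-q_{\min}}{1-\overline{\mu}})^T$. *)

theory Defs
  imports "HOL-Analysis.Analysis"
begin

text \<open>Points of R^d are vectors of type real^'n (d = CARD('n)). The coordinates
  d-1 and d are represented by two distinct indices ip (penultimate) and il (last);
  all other indices play the role of coordinates 1..d-2.\<close>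

definition conv_mu :: "real \<Rightarrow> 'a::real_vector set \<Rightarrow> 'a set" where
  "conv_mu \<mu> P = {(\<Sum>p\<in>P. \<alpha> p *\<^sub>R p) | \<alpha>.
      (\<forall>p\<in>P. 0 \<le> \<alpha> p \<and> \<alpha> p \<le> \<mu>) \<and> sum \<alpha> P = 1}"

definition Lpt :: "'n::finite \<Rightarrow> 'n \<Rightarrow> real \<Rightarrow> real^'n" where
  "Lpt ip il y = (\<chi> i. if i = ip then 2 else if i = il then y else 0)"

definition Lline :: "'n::finite \<Rightarrow> 'n \<Rightarrow> (real^'n) set" where
  "Lline ip il = {Lpt ip il y | y. True}"

definition u_left :: "'n::finite \<Rightarrow> 'n \<Rightarrow> real \<Rightarrow> real^'n" where
  "u_left ip il qmin = Lpt ip il qmin"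

definition u_right :: "'n::finite \<Rightarrow> 'n \<Rightarrow> real \<Rightarrow> real \<Rightarrow> real \<Rightarrow> real^'n" where
  "u_right ip il qmin qmax mubar = Lpt ip il (qmin + (qmax - qmin) / (1 - mubar))"

definition mu_q :: "real \<Rightarrow> real \<Rightarrow> real \<Rightarrow> real \<Rightarrow> real" where
  "mu_q qmin qmax mubar qd = 1 - (qd - qmin) * (1 - mubar) / (qmax - qmin)"

end

theory Submission
  imports Defs
begin

lemma Lpt_comb:
  assumes "a + b = 1"
  shows "a *\<^sub>R Lpt ip il y1 + b *\<^sub>R Lpt ip il y2 = Lpt ip il (a*y1 + b*y2)"
  using assms by (auto simp: vec_eq_iff Lpt_def algebra_simps)

lemma Lpt_il: "ip \<noteq> il \<Longrightarrow> Lpt ip il y $ il = y"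
  by (simp add: Lpt_def)

lemma Lpt_inj: "ip \<noteq> il \<Longrightarrow> Lpt ip il y = Lpt ip il z \<longleftrightarrow> y = z"
  by (metis Lpt_il)

lemma Lpt_sum: "Lpt ip il a + Lpt ip il b - Lpt ip il c = Lpt ip il (a + b - c)"
  by (auto simp: vec_eq_iff Lpt_def)

lemma seg_Lpt:
  "closed_segment (Lpt ip il y) (Lpt ip il z) = {Lpt ip il (y + u*(z-y)) | u. 0 \<le> u \<and> u \<le> 1}"
proof -
  have "\<And>u. (1 - u) *\<^sub>R Lpt ip il y + u *\<^sub>R Lpt ip il z = Lpt ip il (y + u*(z-y))"
    by (subst Lpt_comb) (auto simp: algebra_simps)
  then show ?thesis by (auto simp: closed_segment_def)
qed

theorem lemma6:
  fixes ip il :: "'n::finite" and mubar qmin qmax :: real and q :: "real^'n"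
  assumes "ip \<noteq> il"
    and "1/2 \<le> mubar" and "mubar < 1"
    and "qmin < qmax"
    and "q \<in> Lline ip il"
    and "qmin \<le> q $ il" and "q $ il \<le> qmax"
  shows "mu_q qmin qmax mubar (q $ il) \<ge> mubar
    \<and> conv_mu (mu_q qmin qmax mubar (q $ il))
          {u_left ip il qmin, u_right ip il qmin qmax mubar}
        = closed_segment q (u_left ip il qmin + u_right ip il qmin qmax mubar - q)
    \<and> closed_segment q (u_left ip il qmin + u_right ip il qmin qmax mubar - q) \<noteq> {}
    \<and> closed_segment q (u_left ip il qmin + u_right ip il qmin qmax mubar - q)
        \<subseteq> {x \<in> Lline ip il. x $ il \<ge> q $ il}"
proof -
  obtain y where qy: "q = Lpt ip il y" using assms(5) by (auto simp: Lline_def)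
  have yq: "q $ il = y" using qy assms(1) by (simp add: Lpt_il)
  define a where "a = qmin"
  define D where "D = (qmax - qmin) / (1 - mubar)"
  define \<mu> where "\<mu> = mu_q qmin qmax mubar y"
  define c where "c = 1 - \<mu>"
  have Dpos: "D > 0" using assms by (simp add: D_def)
  have c_eq: "c = (y - qmin) * (1 - mubar) / (qmax - qmin)"
    by (simp add: c_def \<mu>_def mu_q_def)
  have c0: "c \<ge> 0" using assms yq by (simp add: c_eq)
  have c1: "c \<le> 1 - mubar"
  proof -
    have "(y - qmin) * (1 - mubar) \<le> (qmax - qmin) * (1 - mubar)"
      using assms yq by (intro mult_right_mono) auto
    then show ?thesis using assms by (simp add: c_eq divide_le_eq mult.commute)
  qed
  have cD: "c * D = y - qmin"
  proof -
    have "1 - mubar \<noteq> 0" "qmax - qmin \<noteq> 0" using assms by auto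
    then show ?thesis by (simp add: c_eq D_def)
  qed
  have yc: "y = a + c * D" using cD by (simp add: a_def)
  have mu_ge: "\<mu> \<ge> mubar" using c1 by (simp add: c_def)
  have chalf: "c \<le> \<mu>" using c1 assms by (simp add: c_def)
  have UL: "u_left ip il qmin = Lpt ip il a" by (simp add: u_left_def a_def)
  have UR: "u_right ip il qmin qmax mubar = Lpt ip il (a + D)" by (simp add: u_right_def a_def D_def)
  have other: "u_left ip il qmin + u_right ip il qmin qmax mubar - q = Lpt ip il (a + \<mu> * D)"
    unfolding UL UR qy Lpt_sum proof -
    have "a + (a + D) - y = a + \<mu> * D" using yc by (simp add: c_def algebra_simps)
    then show "Lpt ip il (a + (a + D) - y) = Lpt ip il (a + \<mu> * D)" by (rule arg_cong)
  qed
  have neq: "Lpt ip il a \<noteq> Lpt ip il (a + D)" using Dpos Lpt_inj[OF assms(1)] by auto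
  have seg: "closed_segment q (u_left ip il qmin + u_right ip il qmin qmax mubar - q)
      = {Lpt ip il (a + t * D) | t. c \<le> t \<and> t \<le> \<mu>}"
  proof -
    have e: "closed_segment q (u_left ip il qmin + u_right ip il qmin qmax mubar - q)
       = {Lpt ip il (y + u*((a + \<mu> * D)-y)) | u. 0 \<le> u \<and> u \<le> 1}"
      unfolding other by (simp only: qy seg_Lpt)
    show ?thesis unfolding e
    proof (intro set_eqI iffI)
      fix x assume "x \<in> {Lpt ip il (y + u*((a + \<mu> * D)-y)) | u. 0 \<le> u \<and> u \<le> 1}"
      then obtain u where u: "0 \<le> u" "u \<le> 1" "x = Lpt ip il (y + u*((a + \<mu> * D)-y))" by auto
      have "c \<le> c + u*(\<mu> - c)" using u chalf by simp
      moreover have "c + u*(\<mu> - c) \<le> \<mu>"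
      proof -
        have "u*(\<mu> - c) \<le> 1*(\<mu> - c)" using u chalf by (intro mult_right_mono) auto
        then show ?thesis by simp
      qed
      moreover have "x = Lpt ip il (a + (c + u*(\<mu> - c)) * D)"
        using u(3) yc by (simp add: algebra_simps)
      ultimately show "x \<in> {Lpt ip il (a + t * D) | t. c \<le> t \<and> t \<le> \<mu>}" by blast
    next
      fix x assume "x \<in> {Lpt ip il (a + t * D) | t. c \<le> t \<and> t \<le> \<mu>}"
      then obtain t where t: "c \<le> t" "t \<le> \<mu>" "x = Lpt ip il (a + t * D)" by auto
      show "x \<in> {Lpt ip il (y + u*((a + \<mu> * D)-y)) | u. 0 \<le> u \<and> u \<le> 1}"
      proof (cases "\<mu> = c")
        case True
        then have "x = Lpt ip il (y + 0*((a + \<mu> * D)-y))" using t yc by simp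
        then show ?thesis by force
      next
        case False
        define u where "u = (t - c) / (\<mu> - c)"
        have pos: "\<mu> - c > 0" using False chalf by simp
        have "0 \<le> u" "u \<le> 1" using t pos by (auto simp: u_def divide_simps)
        moreover have "a + t * D = y + u*((a + \<mu> * D)-y)"
          using yc pos by (simp add: u_def field_simps)
        then have "x = Lpt ip il (y + u*((a + \<mu> * D)-y))"
          using t(3) by simp
        ultimately show ?thesis by blast
      qed
    qed
  qed
  have conv: "conv_mu \<mu> {u_left ip il qmin, u_right ip il qmin qmax mubar}
      = {Lpt ip il (a + t * D) | t. c \<le> t \<and> t \<le> \<mu>}"
    unfolding UL UR conv_mu_def
  proof (intro set_eqI iffI)
    fix x assume "x \<in> {\<Sum>p\<in>{Lpt ip il a, Lpt ip il (a + D)}. \<alpha> p *\<^sub>R p |\<alpha>.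
          (\<forall>p\<in>{Lpt ip il a, Lpt ip il (a + D)}. 0 \<le> \<alpha> p \<and> \<alpha> p \<le> \<mu>) \<and>
          sum \<alpha> {Lpt ip il a, Lpt ip il (a + D)} = 1}"
    then obtain \<alpha> where h: "x = \<alpha> (Lpt ip il a) *\<^sub>R Lpt ip il a + \<alpha> (Lpt ip il (a+D)) *\<^sub>R Lpt ip il (a+D)"
      "0 \<le> \<alpha> (Lpt ip il a)" "\<alpha> (Lpt ip il a) \<le> \<mu>" "0 \<le> \<alpha> (Lpt ip il (a+D))" "\<alpha> (Lpt ip il (a+D)) \<le> \<mu>"
      "\<alpha> (Lpt ip il a) + \<alpha> (Lpt ip il (a+D)) = 1"
      using neq by auto
    have e1: "\<alpha> (Lpt ip il a) * a + \<alpha> (Lpt ip il (a+D)) * (a + D) = a + \<alpha> (Lpt ip il (a+D)) * D"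
    proof -
      have "\<alpha> (Lpt ip il a) = 1 - \<alpha> (Lpt ip il (a+D))" using h(6) by linarith
      then show ?thesis by (simp only:) (simp add: algebra_simps)
    qed
    have "x = Lpt ip il (a + \<alpha> (Lpt ip il (a+D)) * D)"
      unfolding h(1) Lpt_comb[OF h(6)] e1 ..
    moreover have "c \<le> \<alpha> (Lpt ip il (a+D))" using h c_def by simp
    ultimately show "x \<in> {Lpt ip il (a + t * D) | t. c \<le> t \<and> t \<le> \<mu>}" using h by blast
  next
    fix x assume "x \<in> {Lpt ip il (a + t * D) | t. c \<le> t \<and> t \<le> \<mu>}"
    then obtain t where t: "c \<le> t" "t \<le> \<mu>" "x = Lpt ip il (a + t * D)" by auto
    define \<alpha> where "\<alpha> = (\<lambda>p. if p = Lpt ip il a then 1 - t else t)"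
    have s: "(\<Sum>p\<in>{Lpt ip il a, Lpt ip il (a + D)}. \<alpha> p *\<^sub>R p) = (1-t) *\<^sub>R Lpt ip il a + t *\<^sub>R Lpt ip il (a+D)"
      using neq by (simp add: \<alpha>_def)
    have "x = (\<Sum>p\<in>{Lpt ip il a, Lpt ip il (a + D)}. \<alpha> p *\<^sub>R p)"
      unfolding s by (subst Lpt_comb) (auto simp: t(3) algebra_simps)
    moreover have "\<forall>p\<in>{Lpt ip il a, Lpt ip il (a + D)}. 0 \<le> \<alpha> p \<and> \<alpha> p \<le> \<mu>"
      using t c0 c_def neq by (auto simp: \<alpha>_def)
    moreover have "sum \<alpha> {Lpt ip il a, Lpt ip il (a + D)} = 1" using neq by (simp add: \<alpha>_def)
    ultimately show "x \<in> {\<Sum>p\<in>{Lpt ip il a, Lpt ip il (a + D)}. \<alpha> p *\<^sub>R p |\<alpha>.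
          (\<forall>p\<in>{Lpt ip il a, Lpt ip il (a + D)}. 0 \<le> \<alpha> p \<and> \<alpha> p \<le> \<mu>) \<and>
          sum \<alpha> {Lpt ip il a, Lpt ip il (a + D)} = 1}" by blast
  qed
  have sub: "{Lpt ip il (a + t * D) | t. c \<le> t \<and> t \<le> \<mu>} \<subseteq> {x \<in> Lline ip il. x $ il \<ge> q $ il}"
  proof
    fix x assume "x \<in> {Lpt ip il (a + t * D) | t. c \<le> t \<and> t \<le> \<mu>}"
    then obtain t where t: "c \<le> t" "x = Lpt ip il (a + t * D)" by auto
    have "c * D \<le> t * D" using t Dpos by (intro mult_right_mono) auto
    then show "x \<in> {x \<in> Lline ip il. x $ il \<ge> q $ il}"
      using t yq yc assms(1) by (auto simp: Lline_def Lpt_il)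
  qed
  have ne: "closed_segment q (u_left ip il qmin + u_right ip il qmin qmax mubar - q) \<noteq> {}" by simp
  show ?thesis using mu_ge conv seg sub ne unfolding \<mu>_def yq by simp
qed

end
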